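(* The sequence $(\Gamma(n,n+1))_{n\ge1}$ is $1,2,1,2,1,2,\ldots$, i.e., $\Gamma(n,n+1)=1$ for odd $n$ and $\Gamma(n,n+1)=2$ for even $n$.
   Context: For relatively prime positive integers $p,q$, exactly one of the equations $px+qy=\frac{(p-1)(q-1)}{2}$ (Equation 1) and $px+qy+1=\frac{(p-1)(q-1)}{2}$ (Equation 2) has a solution in nonnegative integers $(x,y)$. For positive integers $a,b$ with $d=\gcd(a,b)$, $\Gamma(a,b)=1$ if Equation 1 with $(p,q)=(a/d,b/d)$ has a nonnegative integer solution, and $\Gamma(a,b)=2$ otherwise. *)

theory Defs
  imports Main
begin

text \<open>Equation 1 for relatively prime p, q: p x + q y = (p-1)(q-1)/2 with x, y nonnegative
  integers. For coprime positive p, q the product (p-1)(q-1) is even, so the division is exact.\<close>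
definition eq1_solvable :: "nat \<Rightarrow> nat \<Rightarrow> bool" where
  "eq1_solvable p q \<longleftrightarrow> (\<exists>x y :: nat. 2 * (p * x + q * y) = (p - 1) * (q - 1))"

definition Gamma :: "nat \<Rightarrow> nat \<Rightarrow> nat" where
  "Gamma a b = (let d = gcd a b in if eq1_solvable (a div d) (b div d) then 1 else 2)"

end

theory Submission
  imports Defs
begin

lemma even_case:
  fixes m x y :: nat
  assumes m: "m \<ge> 1" and h: "2 * (2*m * x + (2*m+1) * y) = (2*m - 1) * (2*m)"
  shows False
proof -
  have h1: "int (2*m*x + (2*m+1)*y) = 2*int m*int m - int m"
  proof -
    have "int (2 * (2*m * x + (2*m+1) * y)) = int ((2*m - 1) * (2*m))" using h by simp
    also have "\<dots> = (2*int m - 1) * (2 * int m)" using m by (simp add: of_nat_diff)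
    finally show ?thesis by (simp add: algebra_simps)
  qed
  have h2: "int y + int m = 2 * int m * (int m - int x - int y)"
    using h1 by (simp add: algebra_simps)
  have "int m - int x - int y \<ge> 1"
  proof (rule ccontr)
    assume "\<not> ?thesis"
    hence "int m - int x - int y \<le> 0" by simp
    hence "2 * int m * (int m - int x - int y) \<le> 0"
      by (simp add: mult_nonneg_nonpos)
    with h2 m show False by simp
  qed
  hence "2 * int m * (int m - int x - int y) \<ge> 2 * int m" using m
    by (metis mult.right_neutral mult_left_mono of_nat_0_le_iff zero_le_mult_iff zero_le_numeral)
  hence ym: "int y \<ge> int m" using h2 by simp
  have "(2*int m+1) * int m \<le> (2*int m+1) * int y" using ym
    by (intro mult_left_mono) auto
  moreover have "int ((2*m+1)*y) = (2*int m+1) * int y" by (simp add: algebra_simps)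
  ultimately have "int ((2*m+1)*y) \<ge> (2*int m+1) * int m" by linarith
  moreover have "int (2*m*x + (2*m+1)*y) = int (2*m*x) + int ((2*m+1)*y)" by simp
  moreover have "int (2*m*x) \<ge> 0" by simp
  ultimately have "int (2*m*x + (2*m+1)*y) \<ge> (2*int m+1) * int m" by linarith
  with h1 m show False by (simp add: algebra_simps)
qed

theorem lemma4p2:
  shows "\<forall>n::nat. n \<ge> 1 \<longrightarrow> Gamma n (n + 1) = (if odd n then 1 else 2)"
proof (intro allI impI)
  fix n :: nat assume n: "n \<ge> 1"
  have g: "gcd n (n+1) = 1" by simp
  show "Gamma n (n + 1) = (if odd n then 1 else 2)"
  proof (cases "odd n")
    case True
    then obtain k where k: "n = 2*k+1" using oddE by blast
    have "eq1_solvable n (n+1)" unfolding eq1_solvable_def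
      by (rule exI[of _ k], rule exI[of _ 0]) (simp add: k algebra_simps)
    thus ?thesis using True g by (simp add: Gamma_def)
  next
    case False
    then obtain m where k: "n = 2*m" by blast
    with n have m: "m \<ge> 1" by simp
    have "\<not> eq1_solvable n (n+1)" unfolding eq1_solvable_def
      using even_case[OF m] k by (auto simp: mult.commute)
    thus ?thesis using False g by (simp add: Gamma_def)
  qed
qed

end
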